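(* Let $d\geq1$, fix $p_\rho\geq 0$, and let $\hat\rho$ be a $d\times d$ density operator with eigenvalue decomposition $\hat\rho=\sum_{i=1}^d\hat r_i|b_i\rangle\!\langle b_i|$ ($\{b_i\}$ an orthonormal basis). Consider (P1) maximize $\mathrm{Tr}(\hat\rho\sigma)+p_\rho\sqrt{1-\mathrm{Tr}(\sigma^2)}$ over $\sigma\in L(\mathbb C^d)$ subject to $\sigma\geq0$, $\mathrm{Tr}(\sigma)=1$; and (P2) maximize $\sum_{i=1}^d\hat r_is_i+p_\rho\sqrt{1-\sum_{i=1}^ds_i^2}$ over $(s_1,\dots,s_d)\in\mathbb R^d$ subject to $\sum_i s_i=1$, $s_i\geq0$ for all $i$. Then (P1) and (P2) are equivalent: they have the same optimal value, the map $(s_1,\dots,s_d)\mapsto\tilde\sigma=\sum_{i=1}^ds_i|b_i\rangle\!\langle b_i|$ is a one-to-one correspondence between feasible arrays of (P2) and density operators diagonal in the basis $\{b_i\}$, preserving objective values, and for every feasible $\sigma$ of (P1) there is such a $\tilde\sigma$ with objective value at least that of $\sigma$. *)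

theory Defs
  imports "HOL-Analysis.Analysis"
begin

text \<open>Operators on C^d are represented as complex d x d matrices, with d = CARD('n).\<close>

definition cinner :: "complex^'n \<Rightarrow> complex^'n \<Rightarrow> complex" where
  "cinner x y = (\<Sum>i\<in>UNIV. cnj (x $ i) * y $ i)"

definition psd :: "complex^'n^'n \<Rightarrow> bool" where
  "psd A \<longleftrightarrow> (\<forall>x. cinner x (A *v x) \<in> \<real> \<and> 0 \<le> Re (cinner x (A *v x)))"

definition density_op :: "complex^'n^'n \<Rightarrow> bool" where
  "density_op A \<longleftrightarrow> psd A \<and> trace A = 1"

definition outer :: "complex^'n \<Rightarrow> complex^'n \<Rightarrow> complex^'n^'n" where
  "outer u v = (\<chi> i j. u $ i * cnj (v $ j))"

definition orthonormal_basis :: "('n \<Rightarrow> complex^'n) \<Rightarrow> bool" where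
  "orthonormal_basis b \<longleftrightarrow> (\<forall>i j. cinner (b i) (b j) = (if i = j then 1 else 0))"

definition diag_in_basis :: "('n \<Rightarrow> complex^'n) \<Rightarrow> complex^'n^'n \<Rightarrow> bool" where
  "diag_in_basis b A \<longleftrightarrow> (\<forall>i j. i \<noteq> j \<longrightarrow> cinner (b i) (A *v b j) = 0)"

definition obj1 :: "complex^'n^'n \<Rightarrow> real \<Rightarrow> complex^'n^'n \<Rightarrow> real" where
  "obj1 \<rho> p \<sigma> = Re (trace (\<rho> ** \<sigma>)) + p * sqrt (1 - Re (trace (\<sigma> ** \<sigma>)))"

definition obj2 :: "('n \<Rightarrow> real) \<Rightarrow> real \<Rightarrow> ('n \<Rightarrow> real) \<Rightarrow> real" where
  "obj2 r p s = (\<Sum>i\<in>UNIV. r i * s i) + p * sqrt (1 - (\<Sum>i\<in>UNIV. (s i)\<^sup>2))"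

definition feasible2 :: "('n::finite \<Rightarrow> real) set" where
  "feasible2 = {s. (\<Sum>i\<in>UNIV. s i) = 1 \<and> (\<forall>i. 0 \<le> s i)}"

definition diag_op :: "('n \<Rightarrow> complex^'n) \<Rightarrow> ('n \<Rightarrow> real) \<Rightarrow> complex^'n^'n" where
  "diag_op b s = (\<Sum>i\<in>UNIV. s i *\<^sub>R outer (b i) (b i))"

end

theory Submission
  imports Defs
begin

definition adj :: "complex^'n^'m \<Rightarrow> complex^'m^'n" where
  "adj W = (\<chi> i j. cnj (W $ j $ i))"

definition Ub :: "('n \<Rightarrow> complex^'n) \<Rightarrow> complex^'n^'n" where
  "Ub b = (\<chi> k i. b i $ k)"

definition dg :: "('n::finite \<Rightarrow> complex) \<Rightarrow> complex^'n^'n" where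
  "dg f = (\<chi> i j. if i = j then f i else 0)"

lemma adj_adj[simp]: "adj (adj W) = W"
  by (simp add: adj_def vec_eq_iff)

lemma adj_mult: "adj (A ** B) = adj B ** adj A"
  by (simp add: adj_def vec_eq_iff matrix_matrix_mult_def mult.commute)

lemma cinner_adj: "cinner x (W *v y) = cinner (adj W *v x) y"
  unfolding cinner_def adj_def matrix_vector_mult_def
  apply (simp add: sum_distrib_left sum_distrib_right)
  apply (subst sum.swap) apply (simp add: mult_ac)
  done

lemma psd_conj: "psd A \<Longrightarrow> psd (adj W ** A ** W)"
  unfolding psd_def
  by (metis cinner_adj adj_adj matrix_vector_mul_assoc)

lemma U_left: "orthonormal_basis b \<Longrightarrow> adj (Ub b) ** Ub b = mat 1"
  unfolding orthonormal_basis_def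
  by (simp add: vec_eq_iff adj_def Ub_def matrix_matrix_mult_def mat_def cinner_def)

lemma U_right: "orthonormal_basis b \<Longrightarrow> Ub b ** adj (Ub b) = mat 1"
  using U_left matrix_left_right_inverse by blast

lemma cinner_b: "cinner (b i) (A *v b j) = (adj (Ub b) ** A ** Ub b) $ i $ j"
  unfolding cinner_def adj_def Ub_def matrix_matrix_mult_def matrix_vector_mult_def
  apply (simp add: sum_distrib_left sum_distrib_right mult_ac)
  apply (subst sum.swap) apply simp done

lemma diag_op_eq: "diag_op b s = Ub b ** dg (\<lambda>i. of_real (s i)) ** adj (Ub b)"
  unfolding diag_op_def Ub_def dg_def adj_def outer_def matrix_matrix_mult_def
  apply (simp add: vec_eq_iff sum_component)
  apply (simp add: vec_eq_iff sum_component if_distrib if_distribR sum.If_cases scaleR_conv_of_real mult_ac)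
  done

lemma trace_conj: "adj U ** U = mat 1 \<Longrightarrow> trace (U ** X ** adj U) = trace X"
  by (metis trace_mul_sym matrix_mul_assoc matrix_mul_lid)

lemma dg_mult: "dg f ** dg g = dg (\<lambda>i. f i * g i)"
  by (simp add: dg_def vec_eq_iff matrix_matrix_mult_def if_distrib if_distribR sum.If_cases)

lemma trace_dg_mult: "trace (dg f ** X) = (\<Sum>i\<in>UNIV. f i * X $ i $ i)"
  by (simp add: dg_def trace_def matrix_matrix_mult_def if_distrib if_distribR sum.If_cases)

lemma trace_dg: "trace (dg f) = (\<Sum>i\<in>UNIV. f i)"
  by (simp add: dg_def trace_def)

lemma psd_entry: "psd M \<Longrightarrow> cinner x (M *v x) = (\<Sum>i\<in>UNIV. \<Sum>j\<in>UNIV. cnj (x$i) * M$i$j * x$j)"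
  by (simp add: cinner_def matrix_vector_mult_def sum_distrib_left mult_ac)

lemma cinner_two:
  assumes "i \<noteq> j"
  shows "cinner (axis i a + axis j c) (M *v (axis i a + axis j c)) =
    cnj a * a * M$i$i + cnj a * c * M$i$j + cnj c * a * M$j$i + cnj c * c * M$j$j"
  using assms
  by (simp add: cinner_def matrix_vector_mult_def axis_def if_distrib if_distribR sum.If_cases
        distrib_left distrib_right sum.distrib algebra_simps)

lemma cinner_one: "cinner (axis i 1) (M *v axis i 1) = M$i$i"
  by (simp add: cinner_def matrix_vector_mult_def axis_def if_distrib if_distribR sum.If_cases)

lemma psd_diag: "psd M \<Longrightarrow> M$i$i \<in> \<real> \<and> 0 \<le> Re (M$i$i)"
  unfolding psd_def by (metis cinner_one)

lemma psd_herm: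
  assumes "psd M" shows "M$j$i = cnj (M$i$j)"
proof (cases "i = j")
  case True
  then show ?thesis using psd_diag[OF assms, of i] by (metis Reals_cnj_iff)
next
  case False
  have d1: "Im (M$i$i) = 0" "Im (M$j$j) = 0"
    using psd_diag[OF assms] complex_is_Real_iff by auto
  have "cinner (axis i 1 + axis j 1) (M *v (axis i 1 + axis j 1)) \<in> \<real>"
    using assms psd_def by blast
  hence h1: "Im (M$i$j) + Im (M$j$i) = 0"
    using cinner_two[OF False, of 1 1 M] d1 by (simp add: complex_is_Real_iff)
  have "cinner (axis i 1 + axis j \<i>) (M *v (axis i 1 + axis j \<i>)) \<in> \<real>"
    using assms psd_def by blast
  hence h2: "Re (M$i$j) - Re (M$j$i) = 0"
    using cinner_two[OF False, of 1 \<i> M] d1 by (simp add: complex_is_Real_iff)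
  show ?thesis using h1 h2 by (simp add: complex_eq_iff)
qed

lemma psd_dg: "(\<And>i. 0 \<le> s i) \<Longrightarrow> psd (dg (\<lambda>i. complex_of_real (s i)))"
proof -
  assume s: "\<And>i. 0 \<le> s i"
  have e: "cinner x (dg (\<lambda>i. complex_of_real (s i)) *v x) = of_real (\<Sum>i\<in>UNIV. s i * (cmod (x$i))^2)" for x
    by (simp add: cinner_def dg_def matrix_vector_mult_def if_distrib if_distribR sum.If_cases
        del: of_real_power)
       (intro sum.cong refl, subst complex_norm_square, simp add: mult_ac)
  show ?thesis unfolding psd_def e using s by (auto intro: sum_nonneg)
qed

lemma trace_split:
  fixes U D V X :: "complex^'n^'n"
  shows  "trace (U ** D ** V ** X) = trace (D ** (V ** X ** U))"
proof -
  have "trace (U ** D ** V ** X) = trace ((U ** D) ** (V ** X))" by (simp add: matrix_mul_assoc)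
  also have "\<dots> = trace ((V ** X) ** (U ** D))" by (rule trace_mul_sym)
  also have "\<dots> = trace ((V ** X ** U) ** D)" by (simp add: matrix_mul_assoc)
  also have "\<dots> = trace (D ** (V ** X ** U))" by (rule trace_mul_sym)
  finally show ?thesis .
qed

context
  fixes b :: "'n::finite \<Rightarrow> complex^'n"
  assumes ob: "orthonormal_basis b"
begin

lemma trace_diag_op: "trace (diag_op b s ** X) = (\<Sum>i\<in>UNIV. of_real (s i) * (adj (Ub b) ** X ** Ub b) $ i $ i)"
  unfolding diag_op_eq by (simp add: trace_split trace_dg_mult)

lemma conj_diag_op: "adj (Ub b) ** diag_op b s ** Ub b = dg (\<lambda>i. of_real (s i))"
proof -
  have "adj (Ub b) ** diag_op b s ** Ub b =
     (adj (Ub b) ** Ub b) ** dg (\<lambda>i. of_real (s i)) ** (adj (Ub b) ** Ub b)"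
    unfolding diag_op_eq by (simp add: matrix_mul_assoc)
  then show ?thesis using U_left[OF ob] by simp
qed

lemma recon: "X = Ub b ** (adj (Ub b) ** X ** Ub b) ** adj (Ub b)"
proof -
  have "Ub b ** (adj (Ub b) ** X ** Ub b) ** adj (Ub b) =
       (Ub b ** adj (Ub b)) ** X ** (Ub b ** adj (Ub b))"
    by (simp add: matrix_mul_assoc)
  then show ?thesis using U_right[OF ob] by simp
qed

lemma trace_sq: "trace (X ** X) = trace ((adj (Ub b) ** X ** Ub b) ** (adj (Ub b) ** X ** Ub b))"
proof -
  let ?M = "adj (Ub b) ** X ** Ub b"
  have "X ** X = Ub b ** ?M ** adj (Ub b) ** (Ub b ** ?M ** adj (Ub b))"
    by (subst recon[symmetric])+ (rule refl)
  also have "\<dots> = Ub b ** (?M ** ?M) ** adj (Ub b)"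
  proof -
    have "Ub b ** ?M ** adj (Ub b) ** (Ub b ** ?M ** adj (Ub b)) =
       Ub b ** ?M ** (adj (Ub b) ** Ub b) ** ?M ** adj (Ub b)"
      by (simp only: matrix_mul_assoc)
    then show ?thesis using U_left[OF ob] by (simp add: matrix_mul_assoc)
  qed
  finally show ?thesis using trace_conj[OF U_left[OF ob]] by simp
qed

lemma obj_diag: "obj1 (diag_op b r) p (diag_op b s) = obj2 r p s"
proof -
  have t1: "trace (diag_op b r ** diag_op b s) = of_real (\<Sum>i\<in>UNIV. r i * s i)"
    unfolding trace_diag_op conj_diag_op by (simp add: dg_def)
  have t2: "trace (diag_op b s ** diag_op b s) = of_real (\<Sum>i\<in>UNIV. (s i)^2)"
    unfolding trace_diag_op conj_diag_op by (simp add: dg_def power2_eq_square)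
  show ?thesis unfolding obj1_def obj2_def t1 t2 by simp
qed

lemma pinch:
  assumes dens: "density_op \<sigma>" and p: "0 \<le> p"
  defines "M \<equiv> adj (Ub b) ** \<sigma> ** Ub b"
  defines "s \<equiv> \<lambda>i. Re (M$i$i)"
  shows "s \<in> feasible2 \<and> obj1 (diag_op b r) p \<sigma> \<le> obj2 r p s"
proof -
  have psdM: "psd M" unfolding M_def using dens psd_conj density_op_def by blast
  have real: "M$i$i = of_real (s i)" for i
    using psd_diag[OF psdM, of i] unfolding s_def by (simp add: complex_is_Real_iff complex_eq_iff)
  have nn: "0 \<le> s i" for i using psd_diag[OF psdM, of i] unfolding s_def by simp
  have trM: "trace M = trace \<sigma>"
    using trace_conj[OF U_left[OF ob], of M] recon[of \<sigma>] unfolding M_def by simp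
  have "(\<Sum>i\<in>UNIV. s i) = Re (trace M)" unfolding s_def trace_def by (simp add: Re_sum)
  also have "\<dots> = 1" using trM dens unfolding density_op_def by simp
  finally have feas: "s \<in> feasible2" unfolding feasible2_def using nn by simp
  have lin: "Re (trace (diag_op b r ** \<sigma>)) = (\<Sum>i\<in>UNIV. r i * s i)"
    unfolding trace_diag_op M_def[symmetric] by (simp add: real Re_sum)
  have "Re (trace (\<sigma> ** \<sigma>)) = Re (trace (M ** M))" unfolding M_def by (subst trace_sq) simp
  also have "\<dots> = (\<Sum>i\<in>UNIV. \<Sum>j\<in>UNIV. (cmod (M$i$j))^2)"
  proof -
    have "Re (M$i$j * M$j$i) = (cmod (M$i$j))^2" for i j
      using psd_herm[OF psdM, of j i] cmod_power2[of "M$i$j"] by (simp add: power2_eq_square)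
    then show ?thesis by (simp add: trace_def matrix_matrix_mult_def Re_sum)
  qed
  also have "\<dots> \<ge> (\<Sum>i\<in>UNIV. (cmod (M$i$i))^2)"
    by (intro sum_mono member_le_sum) auto
  also have "(\<Sum>i\<in>UNIV. (cmod (M$i$i))^2) = (\<Sum>i\<in>UNIV. (s i)^2)"
    by (simp add: real)
  finally have q: "(\<Sum>i\<in>UNIV. (s i)^2) \<le> Re (trace (\<sigma> ** \<sigma>))" .
  have "sqrt (1 - Re (trace (\<sigma> ** \<sigma>))) \<le> sqrt (1 - (\<Sum>i\<in>UNIV. (s i)^2))"
    using q by simp
  hence "obj1 (diag_op b r) p \<sigma> \<le> obj2 r p s"
    unfolding obj1_def obj2_def lin using p by (simp add: mult_left_mono)
  with feas show ?thesis by blast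
qed

lemma diag_density: "s \<in> feasible2 \<Longrightarrow> density_op (diag_op b s) \<and> diag_in_basis b (diag_op b s)"
proof -
  assume f: "s \<in> feasible2"
  have nn: "\<And>i. 0 \<le> s i" and sm: "(\<Sum>i\<in>UNIV. s i) = 1" using f unfolding feasible2_def by auto
  have "psd (adj (adj (Ub b)) ** dg (\<lambda>i. complex_of_real (s i)) ** adj (Ub b))"
    by (rule psd_conj[OF psd_dg[OF nn]])
  hence ps: "psd (diag_op b s)" unfolding diag_op_eq by simp
  have "trace (diag_op b s) = trace (dg (\<lambda>i. complex_of_real (s i)))"
    unfolding diag_op_eq by (rule trace_conj[OF U_left[OF ob]])
  also have "\<dots> = 1" using sm by (simp add: trace_dg flip: of_real_sum)
  finally have "density_op (diag_op b s)" using ps density_op_def by blast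
  moreover have "diag_in_basis b (diag_op b s)"
    unfolding diag_in_basis_def cinner_b conj_diag_op by (simp add: dg_def)
  ultimately show ?thesis by blast
qed

lemma diag_inj: "diag_op b s = diag_op b t \<Longrightarrow> s = t"
proof
  fix i assume "diag_op b s = diag_op b t"
  hence "adj (Ub b) ** diag_op b s ** Ub b = adj (Ub b) ** diag_op b t ** Ub b" by simp
  hence "dg (\<lambda>i. complex_of_real (s i)) = dg (\<lambda>i. complex_of_real (t i))"
    by (simp only: conj_diag_op)
  hence "dg (\<lambda>i. complex_of_real (s i)) $ i $ i = dg (\<lambda>i. complex_of_real (t i)) $ i $ i" by simp
  thus "s i = t i" by (simp add: dg_def)
qed

lemma diag_surj:
  assumes "density_op \<sigma>" "diag_in_basis b \<sigma>"
  shows "\<sigma> \<in> diag_op b ` feasible2"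
proof -
  define M where "M = adj (Ub b) ** \<sigma> ** Ub b"
  define s where "s = (\<lambda>i. Re (M$i$i))"
  have "s \<in> feasible2" using pinch[OF assms(1) order_refl] unfolding s_def M_def by blast
  have psdM: "psd M" unfolding M_def using assms(1) psd_conj density_op_def by blast
  have "M = dg (\<lambda>i. complex_of_real (s i))"
  proof (simp add: vec_eq_iff, intro allI)
    fix i j show "M $ i $ j = dg (\<lambda>i. complex_of_real (s i)) $ i $ j"
    proof (cases "i = j")
      case True
      then show ?thesis using psd_diag[OF psdM, of i] unfolding s_def dg_def
        by (simp add: complex_is_Real_iff complex_eq_iff)
    next
      case False
      then show ?thesis using assms(2) unfolding diag_in_basis_def cinner_b M_def dg_def by simp
    qed
  qed
  hence "\<sigma> = diag_op b s" using recon[of \<sigma>] unfolding diag_op_eq M_def by simp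
  with \<open>s \<in> feasible2\<close> show ?thesis by blast
qed

end

lemma obj2_bound: "s \<in> feasible2 \<Longrightarrow> 0 \<le> p \<Longrightarrow> obj2 r p s \<le> (\<Sum>i\<in>UNIV. \<bar>r i\<bar>) + p"
proof -
  assume f: "s \<in> feasible2" and p: "0 \<le> p"
  have nn: "\<And>i. 0 \<le> s i" and sm: "(\<Sum>i\<in>UNIV. s i) = 1" using f unfolding feasible2_def by auto
  have le1: "s i \<le> 1" for i
    using member_le_sum[of i UNIV s] nn sm by simp
  have "r i * s i \<le> \<bar>r i\<bar>" for i
  proof -
    have "r i * s i \<le> \<bar>r i\<bar> * s i" using nn[of i] by (simp add: mult_right_mono)
    also have "\<dots> \<le> \<bar>r i\<bar>" using le1[of i] nn[of i] by (simp add: mult_left_le)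
    finally show ?thesis .
  qed
  hence a: "(\<Sum>i\<in>UNIV. r i * s i) \<le> (\<Sum>i\<in>UNIV. \<bar>r i\<bar>)" by (rule sum_mono)
  have "sqrt (1 - (\<Sum>i\<in>UNIV. (s i)\<^sup>2)) \<le> 1"
    using sum_nonneg[of UNIV "\<lambda>i. (s i)^2"] by simp
  hence "p * sqrt (1 - (\<Sum>i\<in>UNIV. (s i)\<^sup>2)) \<le> p" using p by (simp add: mult_left_le)
  with a show ?thesis unfolding obj2_def by simp
qed

theorem lemma1:
  fixes \<rho> :: "complex^'n::finite^'n" and r :: "'n \<Rightarrow> real"
    and b :: "'n \<Rightarrow> complex^'n" and p :: real
  assumes "0 \<le> p"
    and "density_op \<rho>"
    and "orthonormal_basis b"
    and "\<rho> = (\<Sum>i\<in>UNIV. r i *\<^sub>R outer (b i) (b i))"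
  shows "(SUP \<sigma>\<in>{\<sigma>. density_op \<sigma>}. obj1 \<rho> p \<sigma>) = (SUP s\<in>feasible2. obj2 r p s)
    \<and> bij_betw (diag_op b) feasible2 {\<sigma>. density_op \<sigma> \<and> diag_in_basis b \<sigma>}
    \<and> (\<forall>s\<in>feasible2. obj1 \<rho> p (diag_op b s) = obj2 r p s)
    \<and> (\<forall>\<sigma>. density_op \<sigma> \<longrightarrow>
           (\<exists>s\<in>feasible2. obj1 \<rho> p (diag_op b s) \<ge> obj1 \<rho> p \<sigma>))"
proof -
  note ob = assms(3)
  have rho: "\<rho> = diag_op b r" unfolding diag_op_def assms(4) ..
  have eq: "\<forall>s\<in>feasible2. obj1 \<rho> p (diag_op b s) = obj2 r p s"
    unfolding rho using obj_diag[OF ob] by simp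
  have dom: "\<forall>\<sigma>. density_op \<sigma> \<longrightarrow> (\<exists>s\<in>feasible2. obj1 \<rho> p (diag_op b s) \<ge> obj1 \<rho> p \<sigma>)"
  proof (intro allI impI)
    fix \<sigma> :: "complex^'n^'n" assume d: "density_op \<sigma>"
    define s where "s = (\<lambda>i. Re ((adj (Ub b) ** \<sigma> ** Ub b)$i$i))"
    have h: "s \<in> feasible2 \<and> obj1 (diag_op b r) p \<sigma> \<le> obj2 r p s"
      unfolding s_def by (rule pinch[OF ob d assms(1)])
    show "\<exists>s\<in>feasible2. obj1 \<rho> p (diag_op b s) \<ge> obj1 \<rho> p \<sigma>"
    proof (rule bexI[of _ s])
      show "s \<in> feasible2" using h ..
      have "obj1 \<rho> p (diag_op b s) = obj2 r p s" using eq h by blast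
      then show "obj1 \<rho> p (diag_op b s) \<ge> obj1 \<rho> p \<sigma>" using h unfolding rho by simp
    qed
  qed
  have bij: "bij_betw (diag_op b) feasible2 {\<sigma>. density_op \<sigma> \<and> diag_in_basis b \<sigma>}"
    unfolding bij_betw_def
  proof
    show "inj_on (diag_op b) feasible2" by (rule inj_onI) (rule diag_inj[OF ob])
    show "diag_op b ` feasible2 = {\<sigma>. density_op \<sigma> \<and> diag_in_basis b \<sigma>}"
    proof
    show "diag_op b ` feasible2 \<subseteq> {\<sigma>. density_op \<sigma> \<and> diag_in_basis b \<sigma>}"
    proof
      fix x assume "x \<in> diag_op b ` feasible2"
      then obtain s where "s \<in> feasible2" "x = diag_op b s" by (rule imageE)
      then show "x \<in> {\<sigma>. density_op \<sigma> \<and> diag_in_basis b \<sigma>}" using diag_density[OF ob] by simp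
    qed
    show "{\<sigma>. density_op \<sigma> \<and> diag_in_basis b \<sigma>} \<subseteq> diag_op b ` feasible2"
    proof
      fix x assume "x \<in> {\<sigma>. density_op \<sigma> \<and> diag_in_basis b \<sigma>}"
      then show "x \<in> diag_op b ` feasible2" using diag_surj[OF ob] by simp
    qed
  qed
  qed
  define e where "e = (\<lambda>i::'n. if i = undefined then 1 else (0::real))"
  have ef: "e \<in> feasible2" unfolding feasible2_def e_def by simp
  have ne2: "(feasible2 :: ('n \<Rightarrow> real) set) \<noteq> {}" using ef by (auto simp del: feasible2_def)
  have ne1: "{\<sigma> :: complex^'n^'n. density_op \<sigma>} \<noteq> {}" unfolding ex_in_conv[symmetric] using diag_density[OF ob ef] by auto
  define B where "B = (\<Sum>i\<in>UNIV. \<bar>r i\<bar>) + p"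
  have bd2: "bdd_above (obj2 r p ` feasible2)"
  proof (intro bdd_aboveI[of _ B])
    fix x assume "x \<in> obj2 r p ` feasible2"
    then obtain s where "s \<in> feasible2" "x = obj2 r p s" by blast
    then show "x \<le> B" using obj2_bound[OF _ assms(1), of s r] unfolding B_def by simp
  qed
  have bd1: "bdd_above ((obj1 \<rho> p) ` {\<sigma>. density_op \<sigma>})"
  proof (intro bdd_aboveI[of _ B])
    fix x assume "x \<in> obj1 \<rho> p ` {\<sigma>. density_op \<sigma>}"
    then obtain \<sigma> :: "complex^'n^'n" where "density_op \<sigma>" "x = obj1 \<rho> p \<sigma>" by blast
    then obtain s where "s \<in> feasible2" "obj1 \<rho> p (diag_op b s) \<ge> x" using dom by blast
    moreover have "obj1 \<rho> p (diag_op b s) = obj2 r p s" using eq \<open>s \<in> feasible2\<close> by simp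
    moreover have "obj2 r p s \<le> B" using obj2_bound[OF \<open>s \<in> feasible2\<close> assms(1), of r] unfolding B_def .
    ultimately show "x \<le> B" by linarith
  qed
  have "(SUP \<sigma>\<in>{\<sigma>. density_op \<sigma>}. obj1 \<rho> p \<sigma>) \<le> (SUP s\<in>feasible2. obj2 r p s)"
  proof (rule cSUP_mono[OF ne1 bd2])
    fix \<sigma> :: "complex^'n^'n" assume "\<sigma> \<in> {\<sigma>. density_op \<sigma>}"
    then obtain s where "s \<in> feasible2" "obj1 \<rho> p (diag_op b s) \<ge> obj1 \<rho> p \<sigma>" using dom by blast
    moreover have "obj1 \<rho> p (diag_op b s) = obj2 r p s" using eq \<open>s \<in> feasible2\<close> by simp
    ultimately show "\<exists>m\<in>feasible2. obj1 \<rho> p \<sigma> \<le> obj2 r p m" by force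
  qed
  moreover have "(SUP s\<in>feasible2. obj2 r p s) \<le> (SUP \<sigma>\<in>{\<sigma>. density_op \<sigma>}. obj1 \<rho> p \<sigma>)"
  proof (rule cSUP_mono[OF ne2 bd1])
    fix s :: "'n \<Rightarrow> real" assume "s \<in> feasible2"
    show "\<exists>m\<in>{\<sigma>. density_op \<sigma>}. obj2 r p s \<le> obj1 \<rho> p m"
    proof -
      have sf: "s \<in> feasible2" by fact
      have "density_op (diag_op b s)" using diag_density[OF ob sf] by simp
      moreover have "obj2 r p s \<le> obj1 \<rho> p (diag_op b s)" using eq sf by simp
      ultimately show ?thesis by blast
    qed
  qed
  ultimately have "(SUP \<sigma>\<in>{\<sigma>. density_op \<sigma>}. obj1 \<rho> p \<sigma>) = (SUP s\<in>feasible2. obj2 r p s)"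
    by (rule antisym)
  then show ?thesis using eq dom bij by (intro conjI) assumption+
qed

end
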